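(* Let $\mathcal{G}^s$ be an SCG and consider the effect $P(y_t\mid \text{do}(x^1_{t-\gamma_1}),\dots,\text{do}(x^n_{t-\gamma_n}))$. The following are equivalent: 1. There exist an intervention $X^i_{t-\gamma_i}$ and a candidate FTCG $\mathcal{G}^f\in\mathcal{C}(\mathcal{G}^s)$ containing a directed path $X^i_{t-\gamma_i}\leftsquigarrow Y_t$ (from $Y_t$ to $X^i_{t-\gamma_i}$) which remains in $\mathcal{NC}\cup\{X^i_{t-\gamma_i}\}$. 2. There exists an intervention $X^i_{t-\gamma_i}$ with $\gamma_i=0$ and $X^i\in\text{Desc}(Y,\mathcal{G}^s_{|\mathcal{S}})$, where $\mathcal{S}:=\{S\in\mathcal{V}^s: t_{\mathcal{NC}}(S)\le t\}\cup\{X^j\in\mathcal{X}^s:\gamma_j=0\}$ and $\mathcal{G}^s_{|\mathcal{S}}$ is the subgraph of $\mathcal{G}^s$ induced by $\mathcal{S}$.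
   Context: Let $\mathcal{V}$ be a finite set of time series, $\mathcal{V}^f=\{X_s: X\in\mathcal{V},s\in\mathbb{Z}\}$. An FTCG is a DAG on $\mathcal{V}^f$ whose edges $X_s\to Z_{s'}$ satisfy $s\le s'$. The SCG reduced from an FTCG $\mathcal{G}^f$ is $\mathcal{G}^s=(\mathcal{V}^s,\mathcal{E}^s)$, $\mathcal{V}^s=\mathcal{V}$, with $X\to Z$ iff $\mathcal{G}^f$ has an edge $X_{s-\gamma}\to Z_s$ with $\gamma\ge0$. An SCG is a graph reduced from some FTCG; $\mathcal{C}(\mathcal{G}^s)$ is the class of candidate FTCGs (those from which $\mathcal{G}^s$ is reduced). Descendants are via directed paths (a vertex is its own descendant). A path from set $\mathbf{A}$ to $\mathbf{B}$ is proper if only its first vertex is in $\mathbf{A}$. A path remains in a set $S$ if all its vertices are in $S$. $\text{Forb}(\mathbf{X},\mathbf{Y},\mathcal{G})$ is the set of all descendants of any $W\notin\mathbf{X}$ lying on a proper directed path from $\mathbf{X}$ to $\mathbf{Y}$ in $\mathcal{G}$. Effect setup: fix $Y\in\mathcal{V}^s$, a time $t$, and interventions $X^1_{t-\gamma_1},\dots,X^n_{t-\gamma_n}$ (distinct vertices of $\mathcal{V}^f$), with standing assumptions $\gamma_i\ge0$ and $Y$ a descendant of every $X^i$ in $\mathcal{G}^s$. $\mathcal{X}^f=\{X^i_{t-\gamma_i}\}_i$, $\mathcal{X}^s=\{X^i\}_i$. $\mathcal{CF}=\bigcup_{\mathcal{G}^f\in\mathcal{C}(\mathcal{G}^s)}\text{Forb}(\mathcal{X}^f,Y_t,\mathcal{G}^f)$,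 $\mathcal{NC}=\mathcal{CF}\setminus\mathcal{X}^f$. For $F\in\mathcal{V}^s$, $t_{\mathcal{NC}}(F)=\min\{t_1:F_{t_1}\in\mathcal{NC}\}$ with $\min\emptyset=+\infty$. *)

theory Defs
  imports Main "HOL-Library.Extended_Real"
begin

text \<open>Time series are elements of type 'v; the finite set of series is V.
  Vertices of an FTCG are pairs (X, s) with s an integer time; edges are a relation.\<close>

type_synonym 'v fvertex = "'v \<times> int"

definition is_FTCG :: "'v set \<Rightarrow> ('v fvertex \<times> 'v fvertex) set \<Rightarrow> bool" where
  "is_FTCG V Ef \<longleftrightarrow>
     Ef \<subseteq> (V \<times> UNIV) \<times> (V \<times> UNIV) \<and>
     acyclic Ef \<and>
     (\<forall>X s Z s'. ((X, s), (Z, s')) \<in> Ef \<longrightarrow> s \<le> s')"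

definition reduced_SCG :: "('v fvertex \<times> 'v fvertex) set \<Rightarrow> ('v \<times> 'v) set" where
  "reduced_SCG Ef = {(X, Z). \<exists>s \<gamma>. \<gamma> \<ge> 0 \<and> ((X, s - \<gamma>), (Z, s)) \<in> Ef}"

definition is_SCG :: "'v set \<Rightarrow> ('v \<times> 'v) set \<Rightarrow> bool" where
  "is_SCG V Es \<longleftrightarrow> (\<exists>Ef. is_FTCG V Ef \<and> reduced_SCG Ef = Es)"

definition candidates :: "'v set \<Rightarrow> ('v \<times> 'v) set \<Rightarrow> ('v fvertex \<times> 'v fvertex) set set" where
  "candidates V Es = {Ef. is_FTCG V Ef \<and> reduced_SCG Ef = Es}"

definition dpath :: "('a \<times> 'a) set \<Rightarrow> 'a list \<Rightarrow> bool" where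
  "dpath E p \<longleftrightarrow> p \<noteq> [] \<and> (\<forall>i. Suc i < length p \<longrightarrow> (p ! i, p ! Suc i) \<in> E)"

definition proper_dpath :: "('a \<times> 'a) set \<Rightarrow> 'a set \<Rightarrow> 'a set \<Rightarrow> 'a list \<Rightarrow> bool" where
  "proper_dpath E A B p \<longleftrightarrow> dpath E p \<and> hd p \<in> A \<and> last p \<in> B \<and> (\<forall>v \<in> set (tl p). v \<notin> A)"

text \<open>Descendants via directed paths (a vertex is its own descendant).\<close>
definition desc :: "('a \<times> 'a) set \<Rightarrow> 'a \<Rightarrow> 'a set" where
  "desc E W = {D. \<exists>p. dpath E p \<and> hd p = W \<and> last p = D}"

definition Forb :: "'a set \<Rightarrow> 'a set \<Rightarrow> ('a \<times> 'a) set \<Rightarrow> 'a set" where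
  "Forb Xs Ys E = \<Union> {desc E W | W. W \<notin> Xs \<and> (\<exists>p. proper_dpath E Xs Ys p \<and> W \<in> set p)}"

definition CF :: "'v set \<Rightarrow> ('v \<times> 'v) set \<Rightarrow> 'v fvertex set \<Rightarrow> 'v \<Rightarrow> int \<Rightarrow> 'v fvertex set" where
  "CF V Es Xf Y t = (\<Union>Ef \<in> candidates V Es. Forb Xf {(Y, t)} Ef)"

definition NC :: "'v set \<Rightarrow> ('v \<times> 'v) set \<Rightarrow> 'v fvertex set \<Rightarrow> 'v \<Rightarrow> int \<Rightarrow> 'v fvertex set" where
  "NC V Es Xf Y t = CF V Es Xf Y t - Xf"

text \<open>t_NC(F) = min {t1. F_t1 \<in> NC}, with min of the empty set = +\<infinity>
  (rendered as the infimum in the extended reals).\<close>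
definition t_NC :: "'v fvertex set \<Rightarrow> 'v \<Rightarrow> ereal" where
  "t_NC N F = Inf (ereal ` of_int ` {t1. (F, t1) \<in> N})"

definition induced :: "('a \<times> 'a) set \<Rightarrow> 'a set \<Rightarrow> ('a \<times> 'a) set" where
  "induced E S = E \<inter> (S \<times> S)"

definition Sset :: "'v set \<Rightarrow> ('v \<times> 'v) set \<Rightarrow> 'v fvertex set \<Rightarrow> 'v \<Rightarrow> int \<Rightarrow> 'v set" where
  "Sset V Es Xf Y t =
     {S \<in> V. t_NC (NC V Es Xf Y t) S \<le> ereal (of_int t)} \<union> {X. (X, t) \<in> Xf}"

end

theory Submission
  imports Defs
begin


lemma dpath_single[simp]: "dpath E [x]"
  by (simp add: dpath_def)

lemma dpath_Cons2[simp]: "dpath E (x # y # zs) \<longleftrightarrow> (x, y) \<in> E \<and> dpath E (y # zs)"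
  unfolding dpath_def
  by (auto simp: nth_Cons split: nat.splits)



lemma dpath_append: "dpath E (xs @ x # ys) \<longleftrightarrow> dpath E (xs @ [x]) \<and> dpath E (x # ys)"
proof (induction xs)
  case Nil then show ?case by simp
next
  case (Cons a xs)
  then show ?case by (cases xs) auto
qed

lemma dpath_mono: "E \<subseteq> E' \<Longrightarrow> dpath E p \<Longrightarrow> dpath E' p"
  unfolding dpath_def by auto

lemma dpath_map: "(\<And>u v. (u, v) \<in> E \<Longrightarrow> (g u, g v) \<in> E') \<Longrightarrow> dpath E p \<Longrightarrow> dpath E' (map g p)"
  unfolding dpath_def by auto

lemma dpath_rev: "dpath E p \<Longrightarrow> dpath (E\<inverse>) (rev p)"
proof (induction p rule: induct_list012)
  case 1 then show ?case by (simp add: dpath_def)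
next
  case (2 x) then show ?case by simp
next
  case (3 x y zs)
  then have "dpath (E\<inverse>) (rev zs @ [y])" by simp
  moreover have "(y, x) \<in> E\<inverse>" using 3 by simp
  ultimately show ?case using dpath_append[of "E\<inverse>" "rev zs" y "[x]"] by simp
qed

lemma dpath_take: "dpath E p \<Longrightarrow> i < length p \<Longrightarrow> dpath E (take (Suc i) p)"
  unfolding dpath_def by auto

definition edges :: "'a list \<Rightarrow> ('a \<times> 'a) set" where
  "edges l = {(l ! i, l ! Suc i) | i. Suc i < length l}"

lemma dpath_edges: "l \<noteq> [] \<Longrightarrow> dpath (edges l) l"
  unfolding dpath_def edges_def by auto

lemma properize:
  "dpath E p \<Longrightarrow> hd p \<in> A \<Longrightarrow> \<exists>q. dpath E q \<and> distinct q \<and> hd q \<in> A \<and> last q = last p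
     \<and> set q \<subseteq> set p \<and> (\<forall>v\<in>set (tl q). v \<notin> A)"
proof (induction "length p" arbitrary: p rule: less_induct)
  case less
  have pne: "p \<noteq> []" using less.prems by (simp add: dpath_def)
  show ?case
  proof (cases "distinct p \<and> (\<forall>v\<in>set (tl p). v \<notin> A)")
    case True then show ?thesis using less.prems by blast
  next
    case False
    then consider "\<not> distinct p" | "\<exists>v\<in>set (tl p). v \<in> A" by blast
    then show ?thesis
    proof cases
      case 1
      then obtain xs ys zs y where p: "p = xs @ [y] @ ys @ [y] @ zs" using not_distinct_decomp by blast
      let ?p = "xs @ y # zs"
      have "dpath E (xs @ y # (ys @ y # zs))" using less.prems(1) p by simp
      then have d1: "dpath E (xs @ [y])" and d2: "dpath E (y # ys @ y # zs)"
        using dpath_append[of E xs y "ys @ y # zs"] by blast+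
      have "dpath E ((y # ys) @ y # zs)" using d2 by simp
      then have "dpath E (y # zs)" using dpath_append[of E "y # ys" y zs] by blast
      then have dp: "dpath E ?p" using d1 dpath_append[of E xs y zs] by blast
      have hd: "hd ?p \<in> A" using less.prems(2) p by (cases xs) auto
      have lst: "last ?p = last p" using p by (cases zs) auto
      have len: "length ?p < length p" using p by simp
      from less.hyps[OF len dp hd] obtain q where q: "dpath E q \<and> distinct q \<and> hd q \<in> A \<and> last q = last ?p
     \<and> set q \<subseteq> set ?p \<and> (\<forall>v\<in>set (tl q). v \<notin> A)" by blast
      moreover have "set ?p \<subseteq> set p" using p by auto
      ultimately have "dpath E q \<and> distinct q \<and> hd q \<in> A \<and> last q = last p
     \<and> set q \<subseteq> set p \<and> (\<forall>v\<in>set (tl q). v \<notin> A)" using lst by auto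
      then show ?thesis by blast
    next
      case 2
      then obtain v where v: "v \<in> set (tl p)" "v \<in> A" by blast
      obtain x0 rest where p: "p = x0 # rest" using pne by (cases p) auto
      have "v \<in> set rest" using v p by simp
      then obtain us ws where rest: "rest = us @ v # ws" using split_list by metis
      have "dpath E ((x0 # us) @ v # ws)" using less.prems(1) p rest by simp
      then have dp: "dpath E (v # ws)" using dpath_append[of E "x0 # us" v ws] by blast
      have len: "length (v # ws) < length p" using p rest by simp
      have "hd (v # ws) \<in> A" using v(2) by simp
      from less.hyps[OF len dp this] obtain q where q: "dpath E q \<and> distinct q \<and> hd q \<in> A \<and> last q = last (v # ws)
     \<and> set q \<subseteq> set (v # ws) \<and> (\<forall>v\<in>set (tl q). v \<notin> A)" by blast
      moreover have "last (v # ws) = last p" using p rest by simp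
      moreover have "set (v # ws) \<subseteq> set p" using p rest by auto
      ultimately have "dpath E q \<and> distinct q \<and> hd q \<in> A \<and> last q = last p
     \<and> set q \<subseteq> set p \<and> (\<forall>v\<in>set (tl q). v \<notin> A)" by auto
      then show ?thesis by blast
    qed
  qed
qed

lemma FTCG_edge:
  assumes "is_FTCG V Ef" "(u, v) \<in> Ef"
  shows "snd u \<le> snd v \<and> fst u \<in> V \<and> fst v \<in> V"
  using assms unfolding is_FTCG_def by (cases u; cases v) auto

lemma dpath_time:
  assumes "is_FTCG V Ef" "dpath Ef p" "i \<le> j" "j < length p"
  shows "snd (p ! i) \<le> snd (p ! j)"
  using assms(3,4)
proof (induction j)
  case 0 then show ?case by simp
next
  case (Suc j)
  show ?case
  proof (cases "i = Suc j")
    case True then show ?thesis by simp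
  next
    case False
    then have "snd (p ! i) \<le> snd (p ! j)" using Suc by simp
    moreover have "(p ! j, p ! Suc j) \<in> Ef" using assms(2) Suc.prems unfolding dpath_def by blast
    ultimately show ?thesis using FTCG_edge[OF assms(1)] by (meson order_trans)
  qed
qed

lemma red_edge:
  assumes "(u, v) \<in> Ef" "snd u \<le> snd v"
  shows "(fst u, fst v) \<in> reduced_SCG Ef"
proof -
  have "((fst u, snd v - (snd v - snd u)), (fst v, snd v)) \<in> Ef" using assms(1) by simp
  then have "\<exists>s \<gamma>. \<gamma> \<ge> 0 \<and> ((fst u, s - \<gamma>), (fst v, s)) \<in> Ef" using assms(2) by (intro exI[of _ "snd v"] exI[of _ "snd v - snd u"]) simp
  then show ?thesis unfolding reduced_SCG_def by simp
qed

lemma SCG_sub: "is_SCG V Es \<Longrightarrow> Es \<subseteq> V \<times> V"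
  unfolding is_SCG_def reduced_SCG_def is_FTCG_def by auto

definition lagE :: "('v \<times> 'v) set \<Rightarrow> ('v fvertex \<times> 'v fvertex) set" where
  "lagE Es = {((A, s), (B, s + 1)) | A B s. (A, B) \<in> Es}"

definition mkE :: "('v \<times> 'v) set \<Rightarrow> 'v fvertex list \<Rightarrow> 'v list \<Rightarrow> int \<Rightarrow> ('v fvertex \<times> 'v fvertex) set" where
  "mkE Es q rho t = lagE Es \<union> edges q \<union> edges (map (\<lambda>c. (c, t)) rho)"

definition idx :: "'a list \<Rightarrow> 'a \<Rightarrow> nat" where
  "idx l x = (LEAST i. i < length l \<and> l ! i = x)"

lemma idx_nth: "distinct l \<Longrightarrow> i < length l \<Longrightarrow> idx l (l ! i) = i"
  unfolding idx_def
  by (rule Least_equality) (auto simp: nth_eq_iff_index_eq)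

lemma mkE_cand:
  assumes Es: "Es \<subseteq> V \<times> V" and dq: "distinct q" and dr: "distinct rho"
    and qe: "\<And>i. Suc i < length q \<Longrightarrow> (fst (q ! i), fst (q ! Suc i)) \<in> Es \<and>
       (snd (q ! i) < snd (q ! Suc i) \<or> (snd (q ! i) = snd (q ! Suc i) \<and> snd (q ! i) < t))"
    and re: "\<And>i. Suc i < length rho \<Longrightarrow> (rho ! i, rho ! Suc i) \<in> Es"
  shows "mkE Es q rho t \<in> candidates V Es"
proof -
  let ?E = "mkE Es q rho t"
  define r where "r v = (if snd v = t then idx rho (fst v) else idx q v)" for v
  define Lt where "Lt = {(u, v). snd u < snd v \<or> (snd u = snd v \<and> r u < r v)}"
  have all: "(fst u, fst v) \<in> Es \<and> (u, v) \<in> Lt" if uv: "(u, v) \<in> ?E" for u v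
  proof -
    consider "(u, v) \<in> lagE Es" | "(u, v) \<in> edges q" | "(u, v) \<in> edges (map (\<lambda>c. (c, t)) rho)"
      using uv unfolding mkE_def by blast
    then show ?thesis
    proof cases
      case 1 then show ?thesis unfolding lagE_def Lt_def by auto
    next
      case 2
      then obtain i where i: "Suc i < length q" "u = q ! i" "v = q ! Suc i" unfolding edges_def by blast
      have "r u = i" if "snd u \<noteq> t" using that i dq idx_nth[OF dq, of i] unfolding r_def by simp
      moreover have "r v = Suc i" if "snd v \<noteq> t" using that i dq idx_nth[OF dq, of "Suc i"] unfolding r_def by simp
      ultimately show ?thesis using qe[OF i(1)] i unfolding Lt_def by auto
    next
      case 3
      then obtain i where i: "Suc i < length rho" "u = (rho ! i, t)" "v = (rho ! Suc i, t)" unfolding edges_def by auto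
      have "r u = i" "r v = Suc i" using i idx_nth[OF dr, of i] idx_nth[OF dr, of "Suc i"] unfolding r_def by auto
      then show ?thesis using re[OF i(1)] i unfolding Lt_def by auto
    qed
  qed
  have transLt: "trans Lt" unfolding trans_def Lt_def by auto
  have "?E\<^sup>+ \<subseteq> Lt"
  proof
    fix x assume "x \<in> ?E\<^sup>+"
    then have "x \<in> Lt\<^sup>+" by (rule trancl_mono) (use all in auto)
    then show "x \<in> Lt" using trancl_id[OF transLt] by simp
  qed
  then have acyc: "acyclic ?E" unfolding acyclic_def Lt_def by auto
  have sub: "?E \<subseteq> (V \<times> UNIV) \<times> (V \<times> UNIV)"
  proof
    fix x assume "x \<in> ?E"
    then obtain u v where x: "x = (u, v)" "(u, v) \<in> ?E" by (cases x) auto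
    then have "(fst u, fst v) \<in> Es" using all by blast
    then show "x \<in> (V \<times> UNIV) \<times> (V \<times> UNIV)" using Es x by (cases u; cases v) auto
  qed
  have mono: "\<forall>X s Z s'. ((X, s), (Z, s')) \<in> ?E \<longrightarrow> s \<le> s'"
    using all unfolding Lt_def by fastforce
  have "is_FTCG V ?E" unfolding is_FTCG_def using sub acyc mono by blast
  moreover have "reduced_SCG ?E = Es"
  proof
    show "reduced_SCG ?E \<subseteq> Es" unfolding reduced_SCG_def using all by fastforce
    show "Es \<subseteq> reduced_SCG ?E"
    proof
      fix x assume x: "x \<in> Es"
      obtain A B where ab: "x = (A, B)" by (cases x)
      have "((A, 1 - 1), (B, 1)) \<in> lagE Es" using x ab unfolding lagE_def by force
      then have "((A, 1 - 1), (B, 1)) \<in> ?E" unfolding mkE_def by blast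
      then have "\<exists>s \<gamma>. (0::int) \<le> \<gamma> \<and> ((A, s - \<gamma>), (B, s)) \<in> ?E"
        by (intro exI[of _ "1::int"]) auto
      then show "x \<in> reduced_SCG ?E" unfolding reduced_SCG_def ab by simp
    qed
  qed
  ultimately show ?thesis unfolding candidates_def by blast
qed

lemma last_take_Suc: "Suc i < length xs \<Longrightarrow> last (take (Suc i) xs) = xs ! i"
  by (simp add: take_Suc_conv_app_nth)

lemma tNC_le: "(c, t1) \<in> N \<Longrightarrow> t_NC N c \<le> ereal (of_int t1)"
  unfolding t_NC_def by (rule Inf_lower) auto

lemma tNC_ge: "(\<And>t1. (c, t1) \<in> N \<Longrightarrow> k \<le> t1) \<Longrightarrow> ereal (of_int k) \<le> t_NC N c"
  unfolding t_NC_def by (rule Inf_greatest) auto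

lemma induced_set:
  assumes "dpath (induced E S) p" "hd p \<in> S"
  shows "set p \<subseteq> S"
proof
  fix x assume "x \<in> set p"
  then obtain i where i: "i < length p" "x = p ! i" by (metis in_set_conv_nth)
  show "x \<in> S"
  proof (cases i)
    case 0 then show ?thesis using i assms by (simp add: hd_conv_nth dpath_def)
  next
    case (Suc j)
    then have "(p ! j, p ! i) \<in> induced E S" using assms(1) i unfolding dpath_def by auto
    then show ?thesis using i unfolding induced_def by auto
  qed
qed

lemma dir1:
  assumes "Y \<in> V"
    and A5: "\<forall>(X, s) \<in> Xf. X \<in> V \<and> s \<le> t \<and> Y \<in> desc Es X"
    and xi: "(Xi, si) \<in> Xf" and Ef: "Ef \<in> candidates V Es"
    and p: "dpath Ef p" "hd p = (Y, t)" "last p = (Xi, si)"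
       "set p \<subseteq> NC V Es Xf Y t \<union> {(Xi, si)}"
  shows "\<exists>Xi. (Xi, t) \<in> Xf \<and> Y \<in> Sset V Es Xf Y t \<and> Xi \<in> desc (induced Es (Sset V Es Xf Y t)) Y"
proof -
  let ?S = "Sset V Es Xf Y t"
  have ft: "is_FTCG V Ef" and red: "reduced_SCG Ef = Es" using Ef unfolding candidates_def by auto
  have pne: "p \<noteq> []" using p unfolding dpath_def by auto
  let ?n = "length p"
  have h0: "p ! 0 = (Y, t)" using p(2) pne by (simp add: hd_conv_nth)
  have hl: "p ! (?n - 1) = (Xi, si)" using p(3) pne by (simp add: last_conv_nth)
  have sit: "si \<le> t" using A5 xi by auto
  have times: "snd (p ! i) = t" if "i < ?n" for i
  proof -
    have "snd (p ! 0) \<le> snd (p ! i)" using dpath_time[OF ft p(1), of 0 i] that by simp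
    moreover have "snd (p ! i) \<le> snd (p ! (?n - 1))" using dpath_time[OF ft p(1), of i "?n - 1"] that by simp
    ultimately show ?thesis using h0 hl sit by simp
  qed
  have si: "si = t" using times[of "?n - 1"] hl pne by simp
  have inV: "fst (p ! i) \<in> V" if "i < ?n" for i
  proof (cases "Suc i < ?n")
    case True
    then have "(p ! i, p ! Suc i) \<in> Ef" using p(1) unfolding dpath_def by blast
    then show ?thesis using FTCG_edge[OF ft] by blast
  next
    case False
    show ?thesis
    proof (cases i)
      case 0 then show ?thesis using h0 assms(1) by simp
    next
      case (Suc j)
      then have "(p ! j, p ! i) \<in> Ef" using p(1) that unfolding dpath_def by auto
      then show ?thesis using FTCG_edge[OF ft] by blast
    qed
  qed
  have inS: "fst (p ! i) \<in> ?S" if "i < ?n" for i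
  proof (cases "p ! i = (Xi, si)")
    case True then show ?thesis using xi si unfolding Sset_def by auto
  next
    case False
    then have "p ! i \<in> NC V Es Xf Y t" using p(4) that nth_mem by blast
    moreover have "p ! i = (fst (p ! i), t)" using times[OF that] by (cases "p ! i") auto
    ultimately have "t_NC (NC V Es Xf Y t) (fst (p ! i)) \<le> ereal (of_int t)" using tNC_le by metis
    then show ?thesis using inV[OF that] unfolding Sset_def by auto
  qed
  have "dpath (induced Es ?S) (map fst p)"
    unfolding dpath_def
  proof (intro conjI allI impI)
    show "map fst p \<noteq> []" using pne by simp
    fix i assume i: "Suc i < length (map fst p)"
    then have e: "(p ! i, p ! Suc i) \<in> Ef" using p(1) unfolding dpath_def by auto
    have "snd (p ! i) \<le> snd (p ! Suc i)" using FTCG_edge[OF ft e] by blast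
    then have "(fst (p ! i), fst (p ! Suc i)) \<in> Es" using red_edge[OF e] red by simp
    then show "(map fst p ! i, map fst p ! Suc i) \<in> induced Es ?S"
      using inS[of i] inS[of "Suc i"] i unfolding induced_def by auto
  qed
  moreover have "hd (map fst p) = Y" using p(2) pne by (simp add: hd_map)
  moreover have "last (map fst p) = Xi" using p(3) pne by (simp add: last_map)
  ultimately have "Xi \<in> desc (induced Es ?S) Y" unfolding desc_def by blast
  moreover have "Y \<in> ?S" using inS[of 0] h0 pne by simp
  ultimately show ?thesis using xi si by blast
qed

lemma rho_exists:
  assumes p0: "dpath (induced Es S) p0" "hd p0 = Y" "last p0 = Xi" and xi: "(Xi, t) \<in> Xf" and Y: "Y \<in> S"
  shows "\<exists>rho. dpath (induced Es S) rho \<and> distinct rho \<and> hd rho = Y \<and> (last rho, t) \<in> Xf \<and>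
     set rho \<subseteq> S \<and> (\<forall>i. Suc i < length rho \<longrightarrow> (rho ! i, t) \<notin> Xf)"
proof -
  let ?A = "{c. (c, t) \<in> Xf}"
  have p0ne: "p0 \<noteq> []" using p0 unfolding dpath_def by auto
  have "dpath ((induced Es S)\<inverse>) (rev p0)" using dpath_rev[OF p0(1)] .
  moreover have "hd (rev p0) \<in> ?A" using p0 xi p0ne by (simp add: hd_rev)
  ultimately obtain q where q: "dpath ((induced Es S)\<inverse>) q" "distinct q" "hd q \<in> ?A" "last q = last (rev p0)"
    "set q \<subseteq> set (rev p0)" "\<forall>v\<in>set (tl q). v \<notin> ?A"
    using properize[of "(induced Es S)\<inverse>" "rev p0" ?A] by blast
  have qne: "q \<noteq> []" using q(1) unfolding dpath_def by auto
  let ?r = "rev q"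
  have "dpath (induced Es S) ?r" using dpath_rev[OF q(1)] by simp
  moreover have "distinct ?r" using q(2) by simp
  moreover have "hd ?r = Y" using q(4) p0 p0ne qne by (simp add: hd_rev last_rev)
  moreover have "(last ?r, t) \<in> Xf" using q(3) qne by (simp add: last_rev)
  moreover have "set ?r \<subseteq> S" using q(5) induced_set[OF p0(1)] p0(2) Y by auto
  moreover have "(?r ! i, t) \<notin> Xf" if "Suc i < length ?r" for i
  proof -
    have il: "i < length (butlast ?r)" using that by simp
    have "butlast ?r ! i = ?r ! i" using nth_butlast[OF il] .
    moreover have "butlast ?r ! i \<in> set (butlast ?r)" using il by (rule nth_mem)
    ultimately have "?r ! i \<in> set (tl q)" by (simp only: butlast_rev set_rev)
    then show ?thesis using q(6) by blast
  qed
  ultimately show ?thesis by blast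
qed

lemma caseB_path:
  assumes Ef1: "Ef1 \<in> candidates V Es" and pr: "proper_dpath Ef1 Xf {(Y, t)} \<pi>"
    and W: "W \<in> set \<pi>" "W \<notin> Xf" "snd W < t"
  shows "\<exists>q. dpath {(u, v). (fst u, fst v) \<in> Es \<and> snd u \<le> snd v} q \<and> distinct q \<and> hd q \<in> Xf \<and>
     last q = (Y, t) \<and> (\<forall>v\<in>set (tl q). v \<notin> Xf) \<and> (\<forall>v\<in>set q. v \<noteq> (Y, t) \<longrightarrow> snd v < t)"
proof -
  let ?R = "{(u, v). (fst u, fst v) \<in> Es \<and> snd u \<le> snd v}"
  have ft: "is_FTCG V Ef1" and red: "reduced_SCG Ef1 = Es" using Ef1 unfolding candidates_def by auto
  have dp: "dpath Ef1 \<pi>" and hdx: "hd \<pi> \<in> Xf" and lst: "last \<pi> = (Y, t)"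
    using pr unfolding proper_dpath_def by auto
  have pne: "\<pi> \<noteq> []" using dp unfolding dpath_def by auto
  obtain k where k: "k < length \<pi>" "W = \<pi> ! k" using W(1) by (metis in_set_conv_nth)
  have "snd (\<pi> ! 0) \<le> snd W" using dpath_time[OF ft dp, of 0 k] k by simp
  then have hdt: "snd (hd \<pi>) < t" using W(3) pne by (simp add: hd_conv_nth)
  have "butlast \<pi> \<noteq> []"
  proof
    assume "butlast \<pi> = []"
    then have "\<pi> = [last \<pi>]" using pne by (metis append_butlast_last_id append_Nil)
    then have "W = hd \<pi>" using W(1) by (metis empty_iff empty_set list.sel(1) set_ConsD)
    then show False using W(2) hdx by simp
  qed
  then obtain vs u where bl: "butlast \<pi> = vs @ [u]" by (metis rev_exhaust)
  have pi: "\<pi> = vs @ u # [(Y, t)]" using bl lst pne by (metis append_butlast_last_id append.assoc append_Cons append_Nil)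
  define g where "g = (\<lambda>v :: 'a fvertex. (fst v, min (snd v) (t - 1)))"
  have d1: "dpath Ef1 (vs @ [u])" and d2: "dpath Ef1 [u, (Y, t)]"
    using dp pi dpath_append[of Ef1 vs u "[(Y, t)]"] by auto
  have gR: "(g a, g b) \<in> ?R" if "(a, b) \<in> Ef1" for a b
  proof -
    have "snd a \<le> snd b" using FTCG_edge[OF ft that] by blast
    then show ?thesis using red_edge[OF that] red unfolding g_def by auto
  qed
  have "dpath ?R (map g (vs @ [u]))" using dpath_map[where E=Ef1 and g=g and E'="?R" and p="vs @ [u]"] gR d1 by blast
  then have m1: "dpath ?R (map g vs @ [g u])" by simp
  have eu: "(u, (Y, t)) \<in> Ef1" using d2 by simp
  have "snd u \<le> snd (Y, t)" using FTCG_edge[OF ft eu] by blast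
  then have "(g u, (Y, t)) \<in> ?R" using red_edge[OF eu] red unfolding g_def by auto
  then have "dpath ?R [g u, (Y, t)]" by simp
  then have dpp: "dpath ?R (map g vs @ g u # [(Y, t)])" using m1 dpath_append[of ?R "map g vs" "g u" "[(Y, t)]"] by blast
  have "hd \<pi> = hd (vs @ [u])" using pi by (cases vs) auto
  then have "hd (map g vs @ g u # [(Y, t)]) = hd \<pi>" using hdt unfolding g_def by (cases vs) auto
  then have hdp: "hd (map g vs @ g u # [(Y, t)]) \<in> Xf" using hdx by simp
  obtain q where q: "dpath ?R q" "distinct q" "hd q \<in> Xf" "last q = last (map g vs @ g u # [(Y, t)])"
    "set q \<subseteq> set (map g vs @ g u # [(Y, t)])" "\<forall>v\<in>set (tl q). v \<notin> Xf"
    using properize[OF dpp hdp] by blast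
  have "\<forall>v\<in>set q. v \<noteq> (Y, t) \<longrightarrow> snd v < t"
  proof (intro ballI impI)
    fix v assume "v \<in> set q" "v \<noteq> (Y, t)"
    then have "v \<in> g ` set (vs @ [u])" using q(5) by auto
    then show "snd v < t" unfolding g_def by auto
  qed
  then show ?thesis using q by auto
qed

lemma dir2:
  assumes SCG: "is_SCG V Es"
    and xi: "(Xi, t) \<in> Xf" and YS: "Y \<in> Sset V Es Xf Y t"
    and dsc: "Xi \<in> desc (induced Es (Sset V Es Xf Y t)) Y"
  shows "\<exists>(Xi, si) \<in> Xf. \<exists>Ef \<in> candidates V Es. \<exists>p.
            dpath Ef p \<and> hd p = (Y, t) \<and> last p = (Xi, si) \<and>
            set p \<subseteq> NC V Es Xf Y t \<union> {(Xi, si)}"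
proof -
  let ?S = "Sset V Es Xf Y t"
  let ?N = "NC V Es Xf Y t"
  have EsV: "Es \<subseteq> V \<times> V" using SCG_sub[OF SCG] .
  obtain p0 where p0: "dpath (induced Es ?S) p0" "hd p0 = Y" "last p0 = Xi"
    using dsc unfolding desc_def by blast
  obtain rho where rho: "dpath (induced Es ?S) rho" "distinct rho" "hd rho = Y" "(last rho, t) \<in> Xf"
     "set rho \<subseteq> ?S" "\<forall>i. Suc i < length rho \<longrightarrow> (rho ! i, t) \<notin> Xf"
    using rho_exists[OF p0 xi YS] by blast
  have rne: "rho \<noteq> []" using rho(1) unfolding dpath_def by auto
  have re: "(rho ! i, rho ! Suc i) \<in> Es" if "Suc i < length rho" for i
    using rho(1) that unfolding dpath_def induced_def by auto
  let ?rt = "map (\<lambda>c. (c, t)) rho"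
  have key: "\<exists>Ef \<in> candidates V Es. edges ?rt \<subseteq> Ef \<and> (\<forall>i. Suc i < length rho \<longrightarrow> (rho ! i, t) \<in> ?N)"
  proof (cases "\<exists>F t1. (F, t1) \<in> ?N \<and> t1 < t")
    case False
    have c: "mkE Es [] rho t \<in> candidates V Es" by (rule mkE_cand[OF EsV _ rho(2)]) (use re in auto)
    have "(rho ! i, t) \<in> ?N" if i: "Suc i < length rho" for i
    proof (rule ccontr)
      assume nin: "(rho ! i, t) \<notin> ?N"
      have "t + 1 \<le> t1" if "(rho ! i, t1) \<in> ?N" for t1
      proof -
        have "t \<le> t1" using False that by force
        moreover have "t1 \<noteq> t" using nin that by auto
        ultimately show ?thesis by simp
      qed
      then have ge: "ereal (of_int (t + 1)) \<le> t_NC ?N (rho ! i)" by (rule tNC_ge)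
      have "rho ! i \<in> ?S" using rho(5) i by auto
      moreover have "(rho ! i, t) \<notin> Xf" using rho(6) i by blast
      ultimately have "t_NC ?N (rho ! i) \<le> ereal (of_int t)" unfolding Sset_def by auto
      then have "ereal (of_int (t + 1)) \<le> ereal (of_int t)" using ge by (rule order_trans[rotated])
      then show False by simp
    qed
    then show ?thesis using c unfolding mkE_def by blast
  next
    case True
    then obtain F t1 where F: "(F, t1) \<in> ?N" "t1 < t" by blast
    then obtain Ef1 where Ef1: "Ef1 \<in> candidates V Es" "(F, t1) \<in> Forb Xf {(Y, t)} Ef1"
      unfolding NC_def CF_def by blast
    then obtain W \<pi> where W: "W \<notin> Xf" "proper_dpath Ef1 Xf {(Y, t)} \<pi>" "W \<in> set \<pi>" "(F, t1) \<in> desc Ef1 W"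
      unfolding Forb_def by blast
    obtain \<sigma> where \<sigma>: "dpath Ef1 \<sigma>" "hd \<sigma> = W" "last \<sigma> = (F, t1)" using W(4) unfolding desc_def by blast
    have ft1: "is_FTCG V Ef1" using Ef1(1) unfolding candidates_def by auto
    have sne: "\<sigma> \<noteq> []" using \<sigma>(1) unfolding dpath_def by auto
    have "snd (\<sigma> ! 0) \<le> snd (\<sigma> ! (length \<sigma> - 1))" using dpath_time[OF ft1 \<sigma>(1), of 0 "length \<sigma> - 1"] sne by simp
    then have "snd W \<le> t1" using \<sigma> sne by (simp add: hd_conv_nth last_conv_nth)
    then have Wt: "snd W < t" using F(2) by simp
    obtain q where q: "dpath {(u, v). (fst u, fst v) \<in> Es \<and> snd u \<le> snd v} q" "distinct q" "hd q \<in> Xf"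
      "last q = (Y, t)" "\<forall>v\<in>set (tl q). v \<notin> Xf" "\<forall>v\<in>set q. v \<noteq> (Y, t) \<longrightarrow> snd v < t"
      using caseB_path[OF Ef1(1) W(2) W(3) W(1) Wt] by blast
    have qne: "q \<noteq> []" using q(1) unfolding dpath_def by auto
    have qe: "(fst (q ! i), fst (q ! Suc i)) \<in> Es \<and>
       (snd (q ! i) < snd (q ! Suc i) \<or> (snd (q ! i) = snd (q ! Suc i) \<and> snd (q ! i) < t))"
      if i: "Suc i < length q" for i
    proof -
      have e: "(fst (q ! i), fst (q ! Suc i)) \<in> Es" "snd (q ! i) \<le> snd (q ! Suc i)"
        using q(1) i unfolding dpath_def by auto
      have "q ! i \<noteq> q ! (length q - 1)" using q(2) i by (simp add: nth_eq_iff_index_eq)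
      then have "q ! i \<noteq> (Y, t)" using q(4) qne by (simp add: last_conv_nth)
      then have "snd (q ! i) < t" using q(6) i by auto
      then show ?thesis using e by auto
    qed
    let ?E = "mkE Es q rho t"
    have c: "?E \<in> candidates V Es" by (rule mkE_cand[OF EsV q(2) rho(2)]) (use qe re in auto)
    have "dpath (edges q) q" using dpath_edges[OF qne] .
    then have "dpath ?E q" by (rule dpath_mono[rotated]) (auto simp: mkE_def)
    then have pq: "proper_dpath ?E Xf {(Y, t)} q" unfolding proper_dpath_def using q by auto
    have Yq: "(Y, t) \<in> set q" using q(4) qne by (metis last_in_set)
    have dr: "dpath ?E ?rt"
    proof -
      have "?rt \<noteq> []" using rne by simp
      then have "dpath (edges ?rt) ?rt" by (rule dpath_edges)
      then show ?thesis by (rule dpath_mono[rotated]) (auto simp: mkE_def)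
    qed
    have "(rho ! i, t) \<in> ?N" if i: "Suc i < length rho" for i
    proof -
      have "dpath ?E (take (Suc i) ?rt)" using dpath_take[OF dr, of i] i by simp
      moreover have "hd (take (Suc i) ?rt) = (Y, t)" using rho(3) rne by (cases rho) auto
      moreover have "last (take (Suc i) ?rt) = (rho ! i, t)"
        using last_take_Suc[of i ?rt] i by simp
      ultimately have D: "(rho ! i, t) \<in> desc ?E (Y, t)" unfolding desc_def by blast
      have "Suc 0 < length rho" using i by simp
      then have "(rho ! 0, t) \<notin> Xf" using rho(6) by blast
      then have YX: "(Y, t) \<notin> Xf" using rho(3) rne by (simp add: hd_conv_nth)
      have "desc ?E (Y, t) \<in> {desc ?E W | W. W \<notin> Xf \<and> (\<exists>p. proper_dpath ?E Xf {(Y, t)} p \<and> W \<in> set p)}"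
        using YX pq Yq by blast
      then have "(rho ! i, t) \<in> Forb Xf {(Y, t)} ?E" unfolding Forb_def using D by (rule UnionI)
      then have "(rho ! i, t) \<in> CF V Es Xf Y t" unfolding CF_def using c by (rule UN_I[rotated])
      moreover have "(rho ! i, t) \<notin> Xf" using rho(6) i by blast
      ultimately show ?thesis unfolding NC_def by (rule DiffI)
    qed
    then show ?thesis using c unfolding mkE_def by blast
  qed
  then obtain Ef where Ef: "Ef \<in> candidates V Es" "edges ?rt \<subseteq> Ef"
    "\<forall>i. Suc i < length rho \<longrightarrow> (rho ! i, t) \<in> ?N" by blast
  have "?rt \<noteq> []" using rne by simp
  then have "dpath Ef ?rt" using dpath_mono[OF Ef(2) dpath_edges] by blast
  moreover have "hd ?rt = (Y, t)" using rho(3) rne by (cases rho) auto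
  moreover have "last ?rt = (last rho, t)" using rne by (simp add: last_map)
  moreover have "set ?rt \<subseteq> ?N \<union> {(last rho, t)}"
  proof
    fix x assume "x \<in> set ?rt"
    then obtain i where i: "i < length rho" "x = (rho ! i, t)" by (auto simp: in_set_conv_nth)
    show "x \<in> ?N \<union> {(last rho, t)}"
    proof (cases "Suc i < length rho")
      case True then show ?thesis using Ef(3) i by auto
    next
      case False
      then have "i = length rho - 1" using i by simp
      then show ?thesis using i rne by (simp add: last_conv_nth)
    qed
  qed
  ultimately have P: "\<exists>Ef\<in>candidates V Es. \<exists>p. dpath Ef p \<and> hd p = (Y, t) \<and> last p = (last rho, t) \<and>
     set p \<subseteq> ?N \<union> {(last rho, t)}" using Ef(1) by blast
  show ?thesis using rho(4) P by (intro bexI[of _ "(last rho, t)"]) simp_all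
qed


theorem lemma2:
  fixes V :: "'v set" and Es :: "('v \<times> 'v) set" and Xf :: "('v \<times> int) set"
    and Y :: 'v and t :: int
  assumes "finite V"
    and "is_SCG V Es"
    and "Y \<in> V"
    and "finite Xf"
    and "\<forall>(X, s) \<in> Xf. X \<in> V \<and> s \<le> t \<and> Y \<in> desc Es X"
  shows "(\<exists>(Xi, si) \<in> Xf. \<exists>Ef \<in> candidates V Es. \<exists>p.
            dpath Ef p \<and> hd p = (Y, t) \<and> last p = (Xi, si) \<and>
            set p \<subseteq> NC V Es Xf Y t \<union> {(Xi, si)})
     \<longleftrightarrow>
         (\<exists>Xi. (Xi, t) \<in> Xf \<and>
            Y \<in> Sset V Es Xf Y t \<and>
            Xi \<in> desc (induced Es (Sset V Es Xf Y t)) Y)"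
proof
  assume "\<exists>(Xi, si) \<in> Xf. \<exists>Ef \<in> candidates V Es. \<exists>p.
            dpath Ef p \<and> hd p = (Y, t) \<and> last p = (Xi, si) \<and>
            set p \<subseteq> NC V Es Xf Y t \<union> {(Xi, si)}"
  then obtain Xi si Ef p where "(Xi, si) \<in> Xf" "Ef \<in> candidates V Es"
    "dpath Ef p" "hd p = (Y, t)" "last p = (Xi, si)" "set p \<subseteq> NC V Es Xf Y t \<union> {(Xi, si)}"
    by blast
  then show "\<exists>Xi. (Xi, t) \<in> Xf \<and> Y \<in> Sset V Es Xf Y t \<and> Xi \<in> desc (induced Es (Sset V Es Xf Y t)) Y"
    using dir1[OF assms(3) assms(5)] by blast
next
  assume "\<exists>Xi. (Xi, t) \<in> Xf \<and> Y \<in> Sset V Es Xf Y t \<and> Xi \<in> desc (induced Es (Sset V Es Xf Y t)) Y"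
  then obtain Xi where "(Xi, t) \<in> Xf" "Y \<in> Sset V Es Xf Y t" "Xi \<in> desc (induced Es (Sset V Es Xf Y t)) Y"
    by blast
  then show "\<exists>(Xi, si) \<in> Xf. \<exists>Ef \<in> candidates V Es. \<exists>p.
            dpath Ef p \<and> hd p = (Y, t) \<and> last p = (Xi, si) \<and>
            set p \<subseteq> NC V Es Xf Y t \<union> {(Xi, si)}"
    using dir2[OF assms(2)] by blast
qed

end
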